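(* Let $p\ne5$ be an odd prime and let $G_p(X,Y)=\sum_{0\le i,j\le p+1}C_{i,j}X^iY^j\in\mathbb{Q}[X,Y]$ be a nonzero polynomial with $G_p(g(\tau),g(p\tau))=0$ for all $\tau\in\mathbb{H}$ (the modular equation for $g$ of level $p$). Then (1) $C_{p+1,0}\ne0$ and $C_{0,p+1}\ne0$; (2) $C_{p+1,j}=C_{j,p+1}=0$ for all $j\in\{1,2,\dots,p+1\}$; (3) $C_{0,j}=C_{j,0}=0$ for all $j\in\{0,1,\dots,p\}$.
   Context: $q=e^{2\pi i\tau}$, $\eta(\tau)=q^{1/24}\prod_{n\ge1}(1-q^n)$, and $g(\tau)=\dfrac{\eta^2(2\tau)\eta^4(5\tau)}{\eta^4(\tau)\eta^2(10\tau)}$. *)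

theory Defs
  imports "HOL-Analysis.Analysis"
begin

definition qnome :: "complex \<Rightarrow> complex" where
  "qnome \<tau> = exp (2 * of_real pi * \<i> * \<tau>)"

definition dedekind_eta :: "complex \<Rightarrow> complex" where
  "dedekind_eta \<tau> = exp (2 * of_real pi * \<i> * \<tau> / 24) *
     (\<Prod>n. 1 - qnome \<tau> ^ Suc n)"

definition gfun :: "complex \<Rightarrow> complex" where
  "gfun \<tau> = (dedekind_eta (2 * \<tau>) ^ 2 * dedekind_eta (5 * \<tau>) ^ 4) /
             (dedekind_eta \<tau> ^ 4 * dedekind_eta (10 * \<tau>) ^ 2)"

definition eval_bipoly :: "nat \<Rightarrow> (nat \<Rightarrow> nat \<Rightarrow> rat) \<Rightarrow> complex \<Rightarrow> complex \<Rightarrow> complex" where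
  "eval_bipoly N C x y = (\<Sum>i\<le>N. \<Sum>j\<le>N. of_rat (C i j) * x ^ i * y ^ j)"

end

theory Submission
  imports Defs "HOL-Real_Asymp.Real_Asymp" "HOL-Computational_Algebra.Polynomial" "HOL-Computational_Algebra.Primes"
begin

definition S1 :: "real \<Rightarrow> real" where
  "S1 s = (\<Sum>n. ln (1 - exp (-s) ^ Suc n))"

definition Ibase :: real where "Ibase = - (\<Sum>k. 1 / (real k)^2)"

lemma phi_lim: "((\<lambda>x::real. x * exp (-x) / (1 - exp (-x))) \<longlongrightarrow> 1) (at_right 0)"
  by real_asymp

lemma phi_le1:
  fixes x :: real assumes "x > 0" shows "x * exp (-x) / (1 - exp (-x)) \<le> 1"
proof -
  have "exp (-x) < 1" using assms by simp
  have "x * exp (-x) \<le> 1 - exp (-x)"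
  proof -
    have "1 + x \<le> exp x" by (rule exp_ge_add_one_self)
    hence "(1 + x) * exp (-x) \<le> exp x * exp (-x)" by (simp add: mult_right_mono)
    thus ?thesis by (simp add: exp_minus field_simps)
  qed
  thus ?thesis using \<open>exp (-x) < 1\<close> by (simp add: divide_le_eq)
qed

lemma phi_nonneg:
  fixes x :: real assumes "x \<ge> 0" shows "x * exp (-x) / (1 - exp (-x)) \<ge> 0"
proof (cases "x = 0")
  case False
  hence "exp (-x) < 1" using assms by simp
  thus ?thesis using assms by simp
qed simp

lemma S1_series:
  assumes s: "s > 0"
  shows "s * S1 s = - (\<Sum>k. (1 / (real k)^2) * ((real k * s) * exp (-(real k * s)) / (1 - exp (-(real k * s)))))"
proof -
  define r where "r = exp (-s)"
  have r0: "0 < r" and r1: "r < 1" using s by (auto simp: r_def)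
  define f where "f = (\<lambda>(n::nat,k::nat). (r ^ Suc n) ^ k / real k)"
  have fnn: "f (n,k) \<ge> 0" for n k using r0 by (auto simp: f_def)
  have rowsum: "((\<lambda>k. f (n,k)) has_sum (- ln (1 - r ^ Suc n))) UNIV" for n
  proof -
    have "\<bar>- (r ^ Suc n)\<bar> < 1" using r0 r1
      using power_Suc_less_one[OF r0 r1, of n] r0 by simp
    from ln_series'[OF this] have "(\<lambda>k. - ((r ^ Suc n) ^ k) / real k) sums ln (1 - r ^ Suc n)" by simp
    hence "(\<lambda>k. f (n,k)) sums (- ln (1 - r ^ Suc n))"
      using sums_minus by (fastforce simp: f_def)
    thus ?thesis by (rule sums_nonneg_imp_has_sum) (use fnn in auto)
  qed
  have colsum: "((\<lambda>n. f (n,k)) has_sum ((r^k / (1 - r^k)) / real k)) UNIV" for k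
  proof (cases "k = 0")
    case True thus ?thesis by (simp add: f_def)
  next
    case False
    have rk: "r^k < 1" "0 < r^k" using r0 r1 False by (auto simp: power_less_one_iff)
    have "(\<lambda>n. (r^k)^n) sums (1 / (1 - r^k))" by (rule geometric_sums) (use rk in auto)
    hence "(\<lambda>n. (r^k) * (r^k)^n / real k) sums ((r^k) * (1 / (1 - r^k)) / real k)"
      by (intro sums_divide sums_mult)
    moreover have "(r^k) * (r^k)^n / real k = f (n,k)" for n
    proof -
      have "(r ^ Suc n) ^ k = r^k * (r^k)^n"
        by (simp add: power_mult_distrib flip: power_mult) (simp add: mult.commute)
      thus ?thesis by (simp add: f_def)
    qed
    ultimately have "(\<lambda>n. f (n,k)) sums ((r^k / (1 - r^k)) / real k)" by simp
    thus ?thesis by (rule sums_nonneg_imp_has_sum) (use fnn in auto)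
  qed
  have lnb: "0 \<le> - ln (1 - r ^ Suc n) \<and> - ln (1 - r ^ Suc n) \<le> r ^ Suc n / (1 - r)" for n
  proof -
    define x where "x = r ^ Suc n"
    have x0: "0 < x" and x1: "x \<le> r" using r0 r1 by (auto simp: x_def power_le_one intro!: mult_left_le)
    have x1': "x < 1" using x1 r1 by simp
    have "- ln (1 - x) = ln (1 / (1 - x))" using x1' by (simp add: ln_div)
    also have "\<dots> \<le> 1 / (1 - x) - 1" by (rule ln_le_minus_one) (use x1' in simp)
    also have "\<dots> = x / (1 - x)" using x1' by (simp add: field_simps)
    also have "\<dots> \<le> x / (1 - r)" using x0 x1 r1 by (intro divide_left_mono) auto
    finally have "- ln (1 - x) \<le> x / (1 - r)" .
    moreover have "0 \<le> - ln (1 - x)" using x0 x1' by simp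
    ultimately show ?thesis by (simp add: x_def)
  qed
  have rowsumm: "summable (\<lambda>n. - ln (1 - r ^ Suc n))"
  proof (rule summable_comparison_test)
    show "\<exists>N. \<forall>n\<ge>N. norm (- ln (1 - r ^ Suc n)) \<le> r ^ Suc n / (1 - r)"
      using lnb by auto
    show "summable (\<lambda>n. r ^ Suc n / (1 - r))"
      using r0 r1 by (intro summable_divide summable_mult) (simp add: summable_geometric)
  qed
  have gs: "(\<lambda>n. - ln (1 - r ^ Suc n)) summable_on UNIV"
    by (rule summable_nonneg_imp_summable_on[OF rowsumm]) (use lnb in auto)
  have fsum: "f summable_on (UNIV \<times> UNIV)"
    using summable_on_SigmaI[where A=UNIV and B="\<lambda>_. UNIV" and f=f and g="\<lambda>n. - ln (1 - r ^ Suc n)", OF rowsum gs fnn] by simp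
  define Tot where "Tot = infsum f (UNIV \<times> UNIV)"
  have ftot: "(f has_sum Tot) (UNIV \<times> UNIV)" using fsum by (simp add: Tot_def)
  have "((\<lambda>n. - ln (1 - r ^ Suc n)) has_sum Tot) UNIV"
    using has_sum_SigmaD[where f=f and S=Tot and A=UNIV and B="\<lambda>_. UNIV", OF _ rowsum] ftot by simp
  hence s1: "(\<lambda>n. - ln (1 - r ^ Suc n)) sums Tot" by (rule has_sum_imp_sums)
  have "((\<lambda>(k,n). f (n,k)) has_sum Tot) (UNIV \<times> UNIV)"
    using ftot has_sum_swap[where f=f and S=Tot and A=UNIV and B=UNIV] by simp
  hence "((\<lambda>k. (r^k / (1 - r^k)) / real k) has_sum Tot) UNIV"
    using has_sum_SigmaD[where f="\<lambda>(k,n). f (n,k)" and S=Tot and A=UNIV and B="\<lambda>_. UNIV" and g="\<lambda>k. (r^k / (1 - r^k)) / real k"] colsum by simp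
  hence s2: "(\<lambda>k. (r^k / (1 - r^k)) / real k) sums Tot" by (rule has_sum_imp_sums)
  have "S1 s = - Tot"
    using sums_minus[OF s1] sums_unique by (fastforce simp: S1_def r_def)
  moreover have "(\<lambda>k. (1 / (real k)^2) * ((real k * s) * exp (-(real k * s)) / (1 - exp (-(real k * s))))) sums (s * Tot)"
  proof -
    have "(\<lambda>k. s * ((r^k / (1 - r^k)) / real k)) sums (s * Tot)" by (rule sums_mult[OF s2])
    moreover have "s * ((r^k / (1 - r^k)) / real k) = (1 / (real k)^2) * ((real k * s) * exp (-(real k * s)) / (1 - exp (-(real k * s))))" for k
    proof -
      have e: "r ^ k = exp (-(real k * s))" by (simp add: r_def flip: exp_of_nat_mult)
      have g: "s * (E / (1 - E) / c) = 1 / c^2 * (c * s * E / (1 - E))" for E c :: real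
        by (cases "c = 0") (simp_all add: power2_eq_square)
      show ?thesis unfolding e[symmetric] by (rule g)
    qed
    ultimately show ?thesis by simp
  qed
  ultimately show ?thesis using sums_unique[of _ "s * Tot"] by simp
qed

lemma scale_at_right:
  fixes c :: real assumes "c > 0"
  shows "filterlim (\<lambda>s. c * s) (at_right 0) (at_right 0)"
proof -
  have "((\<lambda>s. c * s) \<longlongrightarrow> 0) (at_right 0)"
    by (auto intro!: tendsto_eq_intros)
  moreover have "eventually (\<lambda>s. c * s \<in> {0<..} \<and> c * s \<noteq> 0) (at_right (0::real))"
    using eventually_at_right_less[of 0] by eventually_elim (use assms in auto)
  ultimately show ?thesis unfolding filterlim_at by auto
qed

lemma base_lim: "((\<lambda>s. s * S1 s) \<longlongrightarrow> Ibase) (at_right 0)"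
proof -
  define a where "a = (\<lambda>k s. (1 / (real k)^2) * ((real k * s) * exp (-(real k * s)) / (1 - exp (-(real k * s)))))"
  have lim: "((\<lambda>s. a k s) \<longlongrightarrow> 1 / (real k)^2) (at_right 0)" for k
  proof (cases "k = 0")
    case True thus ?thesis by (simp add: a_def)
  next
    case False
    have "((\<lambda>s. (real k * s) * exp (-(real k * s)) / (1 - exp (-(real k * s)))) \<longlongrightarrow> 1) (at_right 0)"
      using filterlim_compose[OF phi_lim scale_at_right[of "real k"]] False by (simp add: o_def)
    hence "((\<lambda>s. (1 / (real k)^2) * ((real k * s) * exp (-(real k * s)) / (1 - exp (-(real k * s))))) \<longlongrightarrow> (1 / (real k)^2) * 1) (at_right 0)"
      by (intro tendsto_mult tendsto_const)
    thus ?thesis by (simp add: a_def)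
  qed
  have bound: "eventually (\<lambda>(k,s). norm (a k s) \<le> 1 / (real k)^2) (at_top \<times>\<^sub>F at_right 0)"
  proof -
    have "eventually (\<lambda>x. True \<and> snd x > (0::real)) (at_top \<times>\<^sub>F at_right 0)"
      by (intro eventually_prodI eventually_at_right_less) simp
    thus ?thesis
    proof eventually_elim
      case (elim x)
      obtain k s where x: "x = (k,s)" by (cases x)
      have s: "s > 0" using elim x by simp
      have "0 \<le> real k * s" using s by simp
      note h = phi_nonneg[OF this]
      have h2: "(real k * s) * exp (-(real k * s)) / (1 - exp (-(real k * s))) \<le> 1"
        using phi_le1[of "real k * s"] s by (cases "k = 0") auto
      define ph where "ph = (real k * s) * exp (-(real k * s)) / (1 - exp (-(real k * s)))"
      have h': "0 \<le> ph" "ph \<le> 1" using h h2 by (simp_all only: ph_def)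
      have ak: "a k s = 1 / (real k)^2 * ph" by (simp add: a_def ph_def)
      have "norm (a k s) = 1 / (real k)^2 * ph" unfolding ak real_norm_def
        by (rule abs_of_nonneg) (use h' in simp)
      also have "\<dots> \<le> 1 / (real k)^2 * 1" using h' by (intro mult_left_mono) auto
      finally show ?case by (simp add: x)
    qed
  qed
  have summ: "summable (\<lambda>k. 1 / (real k)^2)"
    using inverse_power_summable[of 2, where 'a=real] by (simp add: inverse_eq_divide)
  have "((\<lambda>s. suminf (\<lambda>k. a k s)) \<longlongrightarrow> (\<Sum>k. 1 / (real k)^2)) (at_right 0)"
    using tannerys_theorem[OF lim bound summ trivial_limit_at_right_real] by (elim conjE)
  hence "((\<lambda>s. - suminf (\<lambda>k. a k s)) \<longlongrightarrow> Ibase) (at_right 0)"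
    unfolding Ibase_def by (rule tendsto_minus)
  moreover have "eventually (\<lambda>s. - suminf (\<lambda>k. a k s) = s * S1 s) (at_right 0)"
    using eventually_at_right_less[of 0] by eventually_elim (subst S1_series, assumption, simp add: a_def)
  ultimately show ?thesis by (rule Lim_transform_eventually)
qed

lemma Ibase_neg: "Ibase < 0"
proof -
  have summ: "summable (\<lambda>k. 1 / (real k)^2)"
    using inverse_power_summable[of 2, where 'a=real] by (simp add: inverse_eq_divide)
  have "0 < (\<Sum>k. 1 / (real k)^2)"
    by (rule suminf_pos2[OF summ, of 1]) auto
  thus ?thesis by (simp add: Ibase_def)
qed

lemma cyclo_poly:
  fixes \<zeta> :: complex
  assumes m: "m > 0" and ord: "\<And>k. \<zeta>^k = 1 \<longleftrightarrow> m dvd k"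
  shows "(\<Prod>k<m. z - \<zeta>^Suc k) = z^m - 1"
proof -
  define P where "P = (\<Prod>k<m. [:-(\<zeta>^Suc k), 1:])"
  define Q where "Q = (monom 1 m - 1 :: complex poly)"
  have z0: "\<zeta> \<noteq> 0"
  proof
    assume "\<zeta> = 0" hence "\<zeta>^m = 0" using m by simp
    with ord[of m] show False by simp
  qed
  have degP: "degree P = m"
    unfolding P_def by (subst degree_prod_eq_sum_degree) auto
  have lcP: "lead_coeff P = 1"
    unfolding P_def by (subst lead_coeff_prod) auto
  have degQ: "degree Q \<le> m" unfolding Q_def
    by (intro order.trans[OF degree_diff_le_max]) (auto simp: degree_monom_le)
  have cQ: "poly.coeff Q m = 1" using m by (simp add: Q_def coeff_monom)
  define A where "A = (\<lambda>k. \<zeta>^Suc k) ` {..<m}"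
  have inj: "inj_on (\<lambda>k. \<zeta>^Suc k) {..<m}"
  proof (rule inj_onI)
    fix a b assume a: "a \<in> {..<m}" and b: "b \<in> {..<m}" and e: "\<zeta>^Suc a = \<zeta>^Suc b"
    show "a = b"
    proof (rule ccontr)
      assume "a \<noteq> b"
      then consider "a < b" | "b < a" by linarith
      thus False
      proof cases
        case 1
        have "\<zeta>^Suc b = \<zeta>^Suc a * \<zeta>^(b - a)" using 1 by (simp add: power_add[symmetric])
        hence "\<zeta>^(b-a) = 1" using e z0 by simp
        hence "m dvd (b - a)" using ord by blast
        from dvd_imp_le[OF this] show False using 1 b by auto
      next
        case 2
        have "\<zeta>^Suc a = \<zeta>^Suc b * \<zeta>^(a - b)" using 2 by (simp add: power_add[symmetric])
        hence "\<zeta>^(a-b) = 1" using e z0 by simp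
        hence "m dvd (a - b)" using ord by blast
        from dvd_imp_le[OF this] show False using 2 a by auto
      qed
    qed
  qed
  have cardA: "card A = m" unfolding A_def using inj by (simp add: card_image)
  have "P = Q"
  proof (rule poly_eqI_degree_lead_coeff[of P m Q A])
    show "poly.coeff P m = poly.coeff Q m" using lcP degP cQ by simp
    show "m \<le> card A" using cardA by simp
    show "degree P \<le> m" using degP by simp
    show "degree Q \<le> m" by fact
    fix x assume "x \<in> A"
    then obtain k where k: "k < m" "x = \<zeta>^Suc k" by (auto simp: A_def)
    have "poly P x = 0" unfolding P_def poly_prod using k by (intro prod_zero) auto
    moreover have "x^m = 1"
    proof -
      have zm: "\<zeta>^m = 1" using ord[of m] by simp
      have "(\<zeta>^Suc k)^m = (\<zeta>^m)^Suc k" by (simp only: power_mult[symmetric] mult.commute)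
      thus ?thesis using zm k by simp
    qed
    ultimately show "poly P x = poly Q x" by (simp add: Q_def poly_monom)
  qed
  hence "poly P z = poly Q z" by simp
  thus ?thesis by (simp add: P_def Q_def poly_prod poly_monom)
qed

lemma cyclo_prod:
  fixes \<zeta> R :: complex
  assumes m: "m > 0" and ord: "\<And>k. \<zeta>^k = 1 \<longleftrightarrow> m dvd k"
  shows "(\<Prod>k<m. 1 - \<zeta>^Suc k * R) = 1 - R^m"
proof (cases "R = 0")
  case True thus ?thesis using m by simp
next
  case False
  have "(\<Prod>k<m. 1 - \<zeta>^Suc k * R) = (\<Prod>k<m. R * (1/R - \<zeta>^Suc k))"
    using False by (intro prod.cong) (auto simp: field_simps)
  also have "\<dots> = R^m * (\<Prod>k<m. 1/R - \<zeta>^Suc k)" by (simp add: prod.distrib)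
  also have "\<dots> = R^m * ((1/R)^m - 1)" using cyclo_poly[OF m ord, of "1/R"] by simp
  also have "\<dots> = 1 - R^m" using False by (simp add: field_simps power_divide)
  finally show ?thesis .
qed

lemma ln_norm_bound:
  fixes w :: complex assumes w: "norm w \<le> 1/2"
  shows "\<bar>ln (norm (1 - w))\<bar> \<le> 2 * norm w"
proof -
  have lo: "1 - norm w \<le> norm (1 - w)" using norm_triangle_ineq2[of 1 w] by simp
  have hi: "norm (1 - w) \<le> 1 + norm w" using norm_triangle_ineq4[of 1 w] by simp
  have p: "0 < 1 - norm w" using w by simp
  have "ln (norm (1 - w)) \<le> norm (1 - w) - 1" by (rule ln_le_minus_one) (use lo p in linarith)
  hence up: "ln (norm (1 - w)) \<le> norm w" using hi by linarith
  have "ln (1 - norm w) \<le> ln (norm (1 - w))" using lo p by (subst ln_le_cancel_iff) auto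
  moreover have "- (norm w / (1 - norm w)) \<le> ln (1 - norm w)"
  proof -
    have "ln (1 / (1 - norm w)) \<le> 1 / (1 - norm w) - 1" by (rule ln_le_minus_one) (use p in simp)
    moreover have "ln (1 / (1 - norm w)) = - ln (1 - norm w)" using p by (simp add: ln_div)
    moreover have "1 / (1 - norm w) - 1 = norm w / (1 - norm w)" using p by (simp add: field_simps)
    ultimately show ?thesis by linarith
  qed
  moreover have "norm w / (1 - norm w) \<le> 2 * norm w"
  proof -
    have "norm w / (1 - norm w) \<le> norm w / (1/2)" using p w by (intro divide_left_mono) auto
    thus ?thesis by simp
  qed
  ultimately have "- (2 * norm w) \<le> ln (norm (1 - w))" by linarith
  thus ?thesis using up norm_ge_zero[of w] by (simp add: abs_le_iff)
qed

lemma summable_ln_norm: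
  fixes w :: "nat \<Rightarrow> complex"
  assumes r: "0 < r" "r < 1" and b: "\<And>n. norm (w n) \<le> r ^ Suc n"
  shows "summable (\<lambda>n. ln (norm (1 - w n)))"
proof (rule summable_comparison_test_ev)
  have "(\<lambda>n. r ^ Suc n) \<longlonglongrightarrow> 0"
  proof -
    have "(\<lambda>n. r * r^n) \<longlonglongrightarrow> r * 0" by (intro tendsto_mult tendsto_const LIMSEQ_power_zero) (use r in simp)
    thus ?thesis by simp
  qed
  hence "eventually (\<lambda>n. r ^ Suc n < 1/2) sequentially"
    by (rule order_tendstoD) simp
  thus "eventually (\<lambda>n. norm (ln (norm (1 - w n))) \<le> 2 * r ^ Suc n) sequentially"
  proof eventually_elim
    case (elim n)
    have "norm (w n) \<le> 1/2" using b[of n] elim by linarith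
    from ln_norm_bound[OF this] show ?case using b[of n] by simp
  qed
  show "summable (\<lambda>n. 2 * r ^ Suc n)"
    using r by (intro summable_mult) (simp add: summable_geometric)
qed

lemma ln_diff_le:
  fixes x y d :: real
  assumes "d > 0" "x \<ge> d" "y \<ge> d"
  shows "\<bar>ln x - ln y\<bar> \<le> \<bar>x - y\<bar> / d"
proof -
  have *: "ln a - ln b \<le> (a - b) / d" if "b \<le> a" "b \<ge> d" for a b
  proof -
    have bp: "b > 0" using that assms by simp
    have "ln a - ln b = ln (a / b)" using bp that by (simp add: ln_div)
    also have "\<dots> \<le> a / b - 1" by (rule ln_le_minus_one) (use bp that in simp)
    also have "\<dots> = (a - b) / b" using bp by (simp add: field_simps)
    also have "\<dots> \<le> (a - b) / d" using that assms by (intro divide_left_mono) auto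
    finally show ?thesis .
  qed
  show ?thesis
  proof (cases "y \<le> x")
    case True
    have "ln y \<le> ln x" using True assms by simp
    thus ?thesis using *[OF True assms(3)] True by simp
  next
    case False
    have "ln x \<le> ln y" using False assms by simp
    thus ?thesis using *[of x y] False assms by simp
  qed
qed

lemma norm_lower:
  fixes \<omega> :: complex
  assumes n: "norm \<omega> = 1" and c: "Re \<omega> \<le> c" "c < 1" and u: "0 \<le> u" "u \<le> 1"
  shows "sqrt (min (1/4) (1 - c)) \<le> norm (1 - \<omega> * of_real u)"
proof -
  have nn: "(Re \<omega>)^2 + (Im \<omega>)^2 = 1" using n cmod_power2[of \<omega>] by simp
  have "(norm (1 - \<omega> * of_real u))^2 = (1 - u * Re \<omega>)^2 + (u * Im \<omega>)^2"
    by (simp add: cmod_power2 algebra_simps)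
  also have "\<dots> = (1 - u)^2 + 2 * u * (1 - Re \<omega>)"
  proof -
    have "(1 - u * Re \<omega>)^2 + (u * Im \<omega>)^2 = 1 - 2 * u * Re \<omega> + u^2 * ((Re \<omega>)^2 + (Im \<omega>)^2)"
      by (simp add: power2_eq_square algebra_simps)
    also have "\<dots> = 1 - 2 * u * Re \<omega> + u^2" using nn by simp
    also have "\<dots> = (1 - u)^2 + 2 * u * (1 - Re \<omega>)" by (simp add: power2_eq_square algebra_simps)
    finally show ?thesis .
  qed
  finally have eq: "(norm (1 - \<omega> * of_real u))^2 = (1 - u)^2 + 2 * u * (1 - Re \<omega>)" .
  have "min (1/4) (1 - c) \<le> (1 - u)^2 + 2 * u * (1 - Re \<omega>)"
  proof (cases "u \<le> 1/2")
    case True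
    have "(1/2)^2 \<le> (1 - u)^2" using True u by (intro power_mono) auto
    hence "1/4 \<le> (1 - u)^2" by (simp add: power2_eq_square)
    moreover have "0 \<le> 2 * u * (1 - Re \<omega>)" using u c by simp
    ultimately show ?thesis by linarith
  next
    case False
    have "1 - c \<le> 2 * u * (1 - Re \<omega>)"
    proof -
      have "1 - c \<le> 1 - Re \<omega>" using c by simp
      moreover have "1 * (1 - Re \<omega>) \<le> (2 * u) * (1 - Re \<omega>)" using False c by (intro mult_right_mono) auto
      hence "1 - Re \<omega> \<le> 2 * u * (1 - Re \<omega>)" by simp
      ultimately show ?thesis by linarith
    qed
    moreover have "0 \<le> (1 - u)^2" by simp
    ultimately show ?thesis by linarith
  qed
  hence "min (1/4) (1 - c) \<le> (norm (1 - \<omega> * of_real u))^2" using eq by simp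
  hence "sqrt (min (1/4) (1 - c)) \<le> sqrt ((norm (1 - \<omega> * of_real u))^2)" by (rule real_sqrt_le_mono)
  thus ?thesis by simp
qed

definition Sz :: "complex \<Rightarrow> real \<Rightarrow> real" where
  "Sz \<zeta> t = (\<Sum>n. ln (norm (1 - (\<zeta> * of_real (exp (-t))) ^ Suc n)))"

lemma main_bound:
  fixes \<zeta> :: complex
  assumes m: "m > 0" and ord: "\<And>k. \<zeta>^k = 1 \<longleftrightarrow> m dvd k" and dl: "\<delta> > 0"
    and low: "\<And>k u. \<not> m dvd k \<Longrightarrow> 0 \<le> u \<Longrightarrow> u \<le> 1 \<Longrightarrow> \<delta> \<le> norm (1 - \<zeta>^k * of_real u)"
    and t: "t > 0"
  shows "\<bar>Sz \<zeta> t - S1 (real m ^ 2 * t)\<bar> \<le> real m / \<delta>"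
proof -
  define r where "r = exp (-t)"
  have r0: "0 < r" and r1: "r < 1" using t by (auto simp: r_def)
  have zm: "\<zeta>^m = 1" using ord[of m] by simp
  have nz: "norm \<zeta> = 1"
  proof -
    have "norm \<zeta> ^ m = 1 ^ m" using zm by (simp flip: norm_power)
    from power_eq_imp_eq_base[OF this] show ?thesis using m by auto
  qed
  define a where "a = (\<lambda>n. ln (norm (1 - (\<zeta> * of_real r) ^ Suc n)))"
  define e where "e = (\<lambda>n. (n div m + 1) * m)"
  define b where "b = (\<lambda>n. ln (norm (1 - \<zeta>^Suc n * of_real (r ^ e n))))"
  have en: "Suc n \<le> e n" "e n \<le> n + m" for n
  proof -
    have h: "n div m * m + n mod m = n" by (rule div_mult_mod_eq)
    have h2: "n mod m < m" using m by simp
    have h3: "e n = n div m * m + m" by (simp add: e_def algebra_simps)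
    show "Suc n \<le> e n" "e n \<le> n + m" using h h2 h3 by linarith+
  qed
  have rpow: "r ^ e n \<le> r ^ Suc n" for n using en(1)[of n] r0 r1 by (intro power_decreasing) auto
  have wa: "(\<zeta> * of_real r) ^ Suc n = \<zeta>^Suc n * of_real (r ^ Suc n)" for n
    by (simp add: power_mult_distrib)
  have sa: "summable a" unfolding a_def
    by (rule summable_ln_norm[OF r0 r1]) (use r0 in \<open>simp add: norm_mult norm_power nz\<close>)
  have sb: "summable b" unfolding b_def
    by (rule summable_ln_norm[OF r0 r1]) (use rpow r0 in \<open>simp add: norm_mult norm_power nz\<close>)
  have diff: "\<bar>a n - b n\<bar> \<le> (real m * t / \<delta>) * r ^ Suc n" for n
  proof (cases "m dvd Suc n")
    case True
    have "m dvd e n" by (simp add: e_def)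
    hence "m dvd (e n - Suc n)" using True by (rule dvd_diff_nat)
    moreover have "e n - Suc n < m" using en[of n] by linarith
    ultimately have "e n - Suc n = 0" by (meson dvd_imp_le not_less neq0_conv)
    hence "e n = Suc n" using en[of n] by linarith
    hence "a n = b n" by (simp only: a_def b_def wa)
    thus ?thesis using dl t r0 by simp
  next
    case False
    define u where "u = r ^ Suc n"
    define v where "v = r ^ e n"
    have u01: "0 \<le> u" "u \<le> 1" unfolding u_def using r0 r1 by (auto intro!: power_le_one simp del: power_Suc)
    have v01: "0 \<le> v" "v \<le> 1" unfolding v_def using r0 r1 by (auto intro!: power_le_one)
    have "\<bar>a n - b n\<bar> \<le> \<bar>norm (1 - \<zeta>^Suc n * of_real u) - norm (1 - \<zeta>^Suc n * of_real v)\<bar> / \<delta>"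
      unfolding a_def b_def wa u_def[symmetric] v_def[symmetric]
      by (rule ln_diff_le[OF dl low[OF False u01] low[OF False v01]])
    also have "\<bar>norm (1 - \<zeta>^Suc n * of_real u) - norm (1 - \<zeta>^Suc n * of_real v)\<bar> \<le> norm ((1 - \<zeta>^Suc n * of_real u) - (1 - \<zeta>^Suc n * of_real v))"
      by (rule norm_triangle_ineq3)
    also have "norm ((1 - \<zeta>^Suc n * of_real u) - (1 - \<zeta>^Suc n * of_real v)) = \<bar>v - u\<bar>"
    proof -
      have "(1 - \<zeta>^Suc n * of_real u) - (1 - \<zeta>^Suc n * of_real v) = \<zeta>^Suc n * of_real (v - u)"
        by (simp add: algebra_simps)
      thus ?thesis by (simp only: norm_mult norm_power nz norm_of_real) simp
    qed
    also have "\<bar>v - u\<bar> \<le> u * (real m * t)"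
    proof -
      have vu: "v = u * r ^ (e n - Suc n)"
      proof -
        have "r ^ e n = r ^ (Suc n + (e n - Suc n))" using en(1)[of n] by simp
        also have "\<dots> = r ^ Suc n * r ^ (e n - Suc n)" by (rule power_add)
        finally show ?thesis by (simp only: u_def v_def)
      qed
      have "r ^ m \<le> r ^ (e n - Suc n)" using en[of n] r0 r1 by (intro power_decreasing) auto
      hence "u * r ^ m \<le> v" using vu u01 by (simp add: mult_left_mono)
      moreover have "v \<le> u" using rpow[of n] by (simp add: u_def v_def)
      moreover have "1 - r ^ m \<le> real m * t"
      proof -
        have "r ^ m = exp (- (real m * t))" by (simp add: r_def flip: exp_of_nat_mult)
        moreover have "1 + (- (real m * t)) \<le> exp (- (real m * t))" by (rule exp_ge_add_one_self)
        ultimately show ?thesis by simp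
      qed
      hence "u * (1 - r ^ m) \<le> u * (real m * t)" using u01 by (intro mult_left_mono) auto
      ultimately show ?thesis by (simp add: algebra_simps)
    qed
    finally have "\<bar>a n - b n\<bar> \<le> u * (real m * t) / \<delta>" using dl by (simp add: divide_right_mono)
    thus ?thesis by (simp add: u_def field_simps)
  qed
  define g where "g = (\<lambda>n. (real m * t / \<delta>) * r ^ Suc n)"
  have sg: "summable g" unfolding g_def using r0 r1 by (intro summable_mult) (simp add: summable_geometric)
  have sumg: "suminf g = (real m * t / \<delta>) * (r / (1 - r))"
  proof -
    have "(\<lambda>n. r * r ^ n) sums (r * (1 / (1 - r)))" by (intro sums_mult geometric_sums) (use r0 r1 in simp)
    hence "g sums ((real m * t / \<delta>) * (r * (1 / (1 - r))))" unfolding g_def by (intro sums_mult) simp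
    thus ?thesis by (simp add: sums_unique[symmetric])
  qed
  have "\<bar>suminf a - suminf b\<bar> \<le> suminf g"
  proof -
    have "suminf a - suminf b = (\<Sum>n. a n - b n)" using suminf_diff[OF sa sb] by simp
    moreover have "norm (\<Sum>n. a n - b n) \<le> suminf g" by (rule norm_suminf_le) (use diff sg in \<open>simp_all add: g_def\<close>)
    ultimately show ?thesis by simp
  qed
  also have "suminf g \<le> real m / \<delta>"
  proof -
    have "t * r / (1 - r) \<le> 1" using phi_le1[OF t] by (simp add: r_def)
    hence "(real m / \<delta>) * (t * r / (1 - r)) \<le> (real m / \<delta>) * 1" using dl by (intro mult_left_mono) auto
    thus ?thesis by (simp add: sumg)
  qed
  finally have A: "\<bar>suminf a - suminf b\<bar> \<le> real m / \<delta>" .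
  have Sa: "Sz \<zeta> t = suminf a" by (simp add: Sz_def a_def r_def)
  have blk: "sum b {l*m..<l*m+m} = ln (1 - exp (-(real m ^ 2 * t)) ^ Suc l)" for l
  proof -
    define R where "R = (of_real (r ^ ((l + 1) * m)) :: complex)"
    have rl: "r ^ ((l+1)*m) < 1" using r0 r1 m by (subst power_less_one_iff) auto
    have "norm R = \<bar>r ^ ((l+1)*m)\<bar>" unfolding R_def by (rule norm_of_real)
    hence NR: "norm R < 1" using rl r0 by simp
    have "sum b {l*m..<l*m+m} = (\<Sum>k<m. b (k + l*m))"
      using sum.shift_bounds_nat_ivl[of b 0 "l*m" m] by (simp add: add.commute atLeast0LessThan)
    also have "\<dots> = (\<Sum>k<m. ln (norm (1 - \<zeta>^Suc k * R)))"
    proof (intro sum.cong refl)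
      fix k assume k: "k \<in> {..<m}"
      have "(k + l*m) div m = l" using k m by simp
      hence "e (k + l*m) = (l+1) * m" by (simp add: e_def)
      moreover have "\<zeta> ^ Suc (k + l*m) = \<zeta> ^ Suc k"
      proof -
        have ee: "Suc (k + l*m) = Suc k + m*l" by simp
        have "\<zeta> ^ Suc (k + l*m) = \<zeta> ^ Suc k * \<zeta> ^ (m * l)" unfolding ee by (rule power_add)
        also have "\<dots> = \<zeta> ^ Suc k * (\<zeta> ^ m) ^ l" by (simp only: power_mult)
        finally show ?thesis by (simp only: zm power_one mult_1_right)
      qed
      ultimately show "b (k + l*m) = ln (norm (1 - \<zeta>^Suc k * R))" by (simp only: b_def R_def)
    qed
    also have "\<dots> = ln (\<Prod>k<m. norm (1 - \<zeta>^Suc k * R))"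
    proof (rule ln_prod[symmetric])
      fix k assume "k \<in> {..<m}"
      have "norm (\<zeta>^Suc k * R) < 1" using NR by (simp add: norm_mult norm_power nz)
      hence "1 - \<zeta>^Suc k * R \<noteq> 0" by auto
      thus "norm (1 - \<zeta>^Suc k * R) \<noteq> 0" by simp
    qed simp
    also have "(\<Prod>k<m. norm (1 - \<zeta>^Suc k * R)) = norm (1 - R^m)"
      by (simp only: prod_norm cyclo_prod[OF m ord])
    also have "norm (1 - R^m) = 1 - exp (-(real m ^ 2 * t)) ^ Suc l"
    proof -
      have "exp (-(real m ^ 2 * t)) ^ Suc l = r ^ ((l + 1) * m * m)"
      proof -
        have "exp (-(real m ^ 2 * t)) = r ^ (m * m)"
          by (simp add: r_def power2_eq_square flip: exp_of_nat_mult)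
        hence "exp (-(real m ^ 2 * t)) ^ Suc l = (r ^ (m * m)) ^ Suc l" by (simp only:)
        also have "\<dots> = r ^ (m * m * Suc l)" by (rule power_mult[symmetric])
        also have "\<dots> = r ^ ((l + 1) * m * m)" by (rule arg_cong[where f="\<lambda>j. r ^ j"]) (simp add: algebra_simps)
        finally show ?thesis .
      qed
      moreover have Rm: "R^m = of_real (r ^ ((l + 1) * m * m))" by (simp add: R_def power_mult flip: of_real_power)
      moreover have "r ^ ((l + 1) * m * m) < 1" using r0 r1 m by (subst power_less_one_iff) auto
      moreover have "1 - R^m = of_real (1 - r ^ ((l + 1) * m * m))" using Rm by simp
      hence "norm (1 - R^m) = \<bar>1 - r ^ ((l + 1) * m * m)\<bar>" by (simp only: norm_of_real)
      ultimately show ?thesis by simp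
    qed
    finally show ?thesis .
  qed
  have "(\<lambda>l. sum b {l*m..<l*m+m}) sums (suminf b)" by (rule sums_group[OF summable_sums[OF sb] m])
  hence "(\<lambda>l. ln (1 - exp (-(real m ^ 2 * t)) ^ Suc l)) sums (suminf b)" by (simp add: blk)
  hence Sb: "S1 (real m ^ 2 * t) = suminf b" by (simp add: S1_def sums_unique[symmetric])
  show ?thesis using A Sa Sb by simp
qed

lemma unit_Re_lt1:
  fixes z :: complex assumes "norm z = 1" "z \<noteq> 1" shows "Re z < 1"
proof (rule ccontr)
  assume "\<not> Re z < 1"
  moreover have "Re z \<le> 1" using complex_Re_le_cmod[of z] assms by simp
  ultimately have re: "Re z = 1" by simp
  have "(Re z)^2 + (Im z)^2 = 1" using assms cmod_power2[of z] by simp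
  hence "Im z = 0" using re by simp
  hence "z = 1" using re by (simp add: complex_eq_iff)
  thus False using assms by simp
qed

lemma main_lim:
  fixes \<zeta> :: complex
  assumes m: "m > 0" and ord: "\<And>k. \<zeta>^k = 1 \<longleftrightarrow> m dvd k"
  shows "((\<lambda>t. t * Sz \<zeta> t) \<longlongrightarrow> Ibase / (real m)^2) (at_right 0)"
proof -
  have zm: "\<zeta>^m = 1" using ord[of m] by simp
  have nz: "norm \<zeta> = 1"
  proof -
    have "norm \<zeta> ^ m = 1 ^ m" using zm by (simp flip: norm_power)
    from power_eq_imp_eq_base[OF this] show ?thesis using m by auto
  qed
  define c0 where "c0 = Max (insert 0 ((\<lambda>k. Re (\<zeta>^k)) ` {1..<m}))"
  have c0: "c0 < 1" unfolding c0_def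
  proof (subst Max_less_iff, simp, simp, intro ballI)
    fix x assume "x \<in> insert 0 ((\<lambda>k. Re (\<zeta>^k)) ` {1..<m})"
    then consider "x = 0" | k where "k \<in> {1..<m}" "x = Re (\<zeta>^k)" by auto
    thus "x < 1"
    proof cases
      case 2
      have "\<not> m dvd k" using 2 by (auto dest: dvd_imp_le)
      hence "\<zeta>^k \<noteq> 1" using ord by blast
      moreover have "norm (\<zeta>^k) = 1" by (simp add: norm_power nz)
      ultimately show ?thesis using unit_Re_lt1 2 by simp
    qed simp
  qed
  have c0b: "Re (\<zeta>^k) \<le> c0" if "\<not> m dvd k" for k
  proof -
    have "\<zeta>^k = \<zeta>^(m * (k div m) + k mod m)" by simp
    also have "\<dots> = (\<zeta>^m)^(k div m) * \<zeta>^(k mod m)" by (simp only: power_add power_mult)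
    finally have e: "\<zeta>^k = \<zeta>^(k mod m)" using zm by simp
    have "k mod m \<noteq> 0" using that by (simp add: dvd_eq_mod_eq_0)
    hence "k mod m \<in> {1..<m}" using m by simp
    hence "Re (\<zeta>^(k mod m)) \<in> insert 0 ((\<lambda>k. Re (\<zeta>^k)) ` {1..<m})" by blast
    hence "Re (\<zeta>^(k mod m)) \<le> c0" unfolding c0_def by (intro Max_ge) auto
    thus ?thesis using e by simp
  qed
  define \<delta> where "\<delta> = sqrt (min (1/4) (1 - c0))"
  have dl: "\<delta> > 0" using c0 by (simp add: \<delta>_def)
  have low: "\<delta> \<le> norm (1 - \<zeta>^k * of_real u)" if "\<not> m dvd k" "0 \<le> u" "u \<le> 1" for k u
    unfolding \<delta>_def by (rule norm_lower) (use that c0 c0b in \<open>simp_all add: norm_power nz\<close>)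
  have lim1: "((\<lambda>t. t * S1 (real m ^ 2 * t)) \<longlongrightarrow> Ibase / (real m)^2) (at_right 0)"
  proof -
    have "((\<lambda>t. (real m ^ 2 * t) * S1 (real m ^ 2 * t)) \<longlongrightarrow> Ibase) (at_right 0)"
      using filterlim_compose[OF base_lim scale_at_right[of "real m ^ 2"]] m by (simp add: o_def)
    hence "((\<lambda>t. (1 / real m ^ 2) * ((real m ^ 2 * t) * S1 (real m ^ 2 * t))) \<longlongrightarrow> (1 / real m ^ 2) * Ibase) (at_right 0)"
      by (intro tendsto_mult tendsto_const)
    moreover have "(1 / real m ^ 2) * ((real m ^ 2 * t) * S1 (real m ^ 2 * t)) = t * S1 (real m ^ 2 * t)" for t
      using m by (simp add: field_simps)
    ultimately show ?thesis by simp
  qed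
  have lim2: "((\<lambda>t. t * Sz \<zeta> t - t * S1 (real m ^ 2 * t)) \<longlongrightarrow> 0) (at_right 0)"
  proof (rule Lim_null_comparison)
    show "eventually (\<lambda>t. norm (t * Sz \<zeta> t - t * S1 (real m ^ 2 * t)) \<le> t * (real m / \<delta>)) (at_right 0)"
      using eventually_at_right_less[of 0]
    proof eventually_elim
      case (elim t)
      have "norm (t * Sz \<zeta> t - t * S1 (real m ^ 2 * t)) = t * \<bar>Sz \<zeta> t - S1 (real m ^ 2 * t)\<bar>"
        using elim by (simp add: abs_mult right_diff_distrib[symmetric])
      also have "\<dots> \<le> t * (real m / \<delta>)"
        using main_bound[OF m ord dl low elim] elim by (intro mult_left_mono) auto
      finally show ?case .
    qed
    show "((\<lambda>t. t * (real m / \<delta>)) \<longlongrightarrow> 0) (at_right 0)"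
      using dl by (auto intro!: tendsto_eq_intros)
  qed
  have "((\<lambda>t. t * S1 (real m ^ 2 * t) + (t * Sz \<zeta> t - t * S1 (real m ^ 2 * t))) \<longlongrightarrow> Ibase / (real m)^2 + 0) (at_right 0)"
    by (rule tendsto_add[OF lim1 lim2])
  thus ?thesis by simp
qed

definition Lz :: "complex \<Rightarrow> real" where
  "Lz \<sigma> = Sz (exp (2 * of_real pi * \<i> * of_real (Re \<sigma>))) (2 * pi * Im \<sigma>)"

lemma qnome_split:
  "qnome \<sigma> = exp (2 * of_real pi * \<i> * of_real (Re \<sigma>)) * of_real (exp (- (2 * pi * Im \<sigma>)))"
proof -
  have eq: "2 * of_real pi * \<i> * \<sigma> = 2 * of_real pi * \<i> * of_real (Re \<sigma>) + of_real (- (2 * pi * Im \<sigma>))"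
    by (simp add: complex_eq_iff)
  show ?thesis unfolding qnome_def eq exp_add by (simp only: exp_of_real)
qed

lemma eta_norm:
  assumes "Im \<sigma> > 0"
  shows "dedekind_eta \<sigma> \<noteq> 0 \<and> ln (norm (dedekind_eta \<sigma>)) = - (2 * pi * Im \<sigma>) / 24 + Lz \<sigma>"
proof -
  define \<zeta> where "\<zeta> = exp (2 * of_real pi * \<i> * of_real (Re \<sigma>))"
  define t where "t = 2 * pi * Im \<sigma>"
  have t: "t > 0" using assms by (simp add: t_def)
  define r where "r = exp (-t)"
  have r0: "0 < r" and r1: "r < 1" using t by (auto simp: r_def)
  have nz: "norm \<zeta> = 1" by (simp add: \<zeta>_def)
  have q: "qnome \<sigma> = \<zeta> * of_real r" by (simp add: qnome_split \<zeta>_def r_def t_def)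
  define f where "f = (\<lambda>n. 1 - qnome \<sigma> ^ Suc n)"
  have nq: "norm (qnome \<sigma> ^ Suc n) = r ^ Suc n" for n
    using r0 by (simp add: q norm_mult norm_power nz)
  have fnz: "f n \<noteq> 0" for n
  proof
    assume "f n = 0"
    hence "qnome \<sigma> ^ Suc n = 1" by (simp add: f_def)
    hence "r ^ Suc n = 1" using nq[of n] by simp
    moreover have "r ^ Suc n < 1" using r0 r1 by (subst power_less_one_iff) auto
    ultimately show False by simp
  qed
  have conv: "convergent_prod f"
  proof -
    have "summable (\<lambda>k. r * r ^ k)" using r0 r1 by (intro summable_mult summable_geometric) simp
    hence "summable (\<lambda>k. norm (- (qnome \<sigma> ^ Suc k)))"
      unfolding norm_minus_cancel nq by (simp only: power_Suc)
    moreover have "- (qnome \<sigma> ^ Suc k) \<noteq> -1" for k using fnz[of k] by (auto simp: f_def)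
    ultimately have "convergent_prod (\<lambda>k. 1 + - (qnome \<sigma> ^ Suc k))"
      by (rule summable_imp_convergent_prod_complex)
    thus ?thesis by (simp add: f_def)
  qed
  have P0: "prodinf f \<noteq> 0" by (rule prodinf_nonzero[OF conv fnz])
  have sl: "summable (\<lambda>n. ln (norm (f n)))" unfolding f_def
    by (rule summable_ln_norm[OF r0 r1]) (simp only: nq order.refl)
  have L1: "(\<lambda>n. norm (\<Prod>i\<le>n. f i)) \<longlonglongrightarrow> norm (prodinf f)"
    by (intro tendsto_norm convergent_prod_LIMSEQ[OF conv])
  have "(\<lambda>n. exp (\<Sum>i\<le>n. ln (norm (f i)))) \<longlonglongrightarrow> exp (\<Sum>n. ln (norm (f n)))"
    by (intro tendsto_exp summable_LIMSEQ'[OF sl])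
  moreover have "exp (\<Sum>i\<le>n. ln (norm (f i))) = norm (\<Prod>i\<le>n. f i)" for n
    using fnz by (simp add: exp_sum prod_norm)
  ultimately have L2: "(\<lambda>n. norm (\<Prod>i\<le>n. f i)) \<longlonglongrightarrow> exp (\<Sum>n. ln (norm (f n)))" by simp
  have np: "norm (prodinf f) = exp (\<Sum>n. ln (norm (f n)))" using LIMSEQ_unique[OF L1 L2] .
  have Sz_eq: "(\<Sum>n. ln (norm (f n))) = Lz \<sigma>"
    by (simp add: Lz_def Sz_def f_def q r_def t_def \<zeta>_def)
  have eta: "dedekind_eta \<sigma> = exp (2 * of_real pi * \<i> * \<sigma> / 24) * prodinf f"
    by (simp add: dedekind_eta_def f_def)
  have ne: "norm (exp (2 * of_real pi * \<i> * \<sigma> / 24)) = exp (- (2 * pi * Im \<sigma>) / 24)"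
    by (simp add: norm_exp_eq_Re)
  have "dedekind_eta \<sigma> \<noteq> 0" using P0 by (simp add: eta)
  moreover have "ln (norm (dedekind_eta \<sigma>)) = - (2 * pi * Im \<sigma>) / 24 + Lz \<sigma>"
    unfolding eta norm_mult ne np Sz_eq by (simp add: ln_mult)
  ultimately show ?thesis by simp
qed

lemma pairlem:
  fixes p i j i' j' :: nat
  assumes p: "p \<ge> 3" and e: "p*i + j = p*i' + j'" and ne: "(i,j) \<noteq> (i',j')"
    and b: "j \<le> p+1" "j' \<le> p+1"
  shows "(i = i' + 1 \<and> j' = j + p) \<or> (i' = i + 1 \<and> j = j' + p)"
proof -
  have one: "i = i2 + 1 \<and> j2 = j1 + p"
    if h: "i = i2 + k" "k > 0" "p*i + j1 = p*i2 + j2" "j2 \<le> p+1" for i i2 k j1 j2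
  proof -
    have "p*k + j1 = j2" using h by (simp add: algebra_simps)
    moreover have "k = 1"
    proof (rule ccontr)
      assume "k \<noteq> 1" hence "k \<ge> 2" using h by simp
      hence "p*2 \<le> p*k" by (rule mult_le_mono2)
      thus False using \<open>p*k + j1 = j2\<close> h p by linarith
    qed
    ultimately show ?thesis using h by simp
  qed
  consider "i = i'" | "i' < i" | "i < i'" by linarith
  thus ?thesis
  proof cases
    case 1 thus ?thesis using e ne by simp
  next
    case 2
    then obtain k where "i = i' + k" "k > 0" by (metis less_imp_add_positive add.commute)
    from one[OF this e b(2)] show ?thesis by simp
  next
    case 3
    then obtain k where "i' = i + k" "k > 0" by (metis less_imp_add_positive add.commute)
    from one[OF this e[symmetric] b(1)] show ?thesis by simp
  qed
qed

lemma get_pair: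
  fixes p :: nat and S :: "(nat \<times> nat) set" and R :: "nat \<Rightarrow> nat \<Rightarrow> bool"
  assumes p: "p \<ge> 3" and fin: "finite S" and ne: "S \<noteq> {}"
    and box: "\<And>i j. (i,j) \<in> S \<Longrightarrow> j \<le> p+1"
    and R: "R = (\<le>) \<or> R = (\<ge>)"
    and H: "\<And>i j. (i,j) \<in> S \<Longrightarrow> \<exists>i' j'. (i',j') \<in> S \<and> (i',j') \<noteq> (i,j) \<and> R (p*i+j) (p*i'+j')"
  shows "\<exists>a b. (a+1, b) \<in> S \<and> (a, b+p) \<in> S \<and> (\<forall>i j. (i,j) \<in> S \<longrightarrow> R (p*i+j) (p*(a+1)+b))"
proof -
  define w where "w = (\<lambda>(i::nat,j::nat). p*i+j)"
  define M where "M = (if R = (\<le>) then Max (w ` S) else Min (w ` S))"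
  have Min: "M \<in> w ` S" unfolding M_def using fin ne by simp
  then obtain i j where s: "(i,j) \<in> S" "w (i,j) = M" by auto
  have ext: "R (w t) M" if "t \<in> S" for t
    using R that fin unfolding M_def by (auto)
  obtain i' j' where s': "(i',j') \<in> S" "(i',j') \<noteq> (i,j)" "R (p*i+j) (p*i'+j')" using H[OF s(1)] by blast
  have "R (w (i',j')) M" using ext[OF s'(1)] .
  hence eq: "p*i + j = p*i' + j'" using s s' R unfolding w_def by auto
  have ext': "R (p*x+y) (p*i+j)" if "(x,y) \<in> S" for x y using ext[OF that] s(2) unfolding w_def by simp
  from pairlem[OF p eq s'(2)[symmetric] box[OF s(1)] box[OF s'(1)]]
  show ?thesis
  proof
    assume h: "i = i' + 1 \<and> j' = j + p"
    show ?thesis apply (rule exI[of _ i'], rule exI[of _ j]) using s(1) s'(1) h ext' by auto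
  next
    assume h: "i' = i + 1 \<and> j = j' + p"
    show ?thesis apply (rule exI[of _ i], rule exI[of _ j']) using s(1) s'(1) h ext' eq by (auto simp: algebra_simps)
  qed
qed

lemma mulcancel:
  fixes p X Y x y :: nat
  assumes "p*X + x \<le> p*Y + y" "y < p + x"
  shows "X \<le> Y"
proof (rule ccontr)
  assume "\<not> X \<le> Y"
  hence "Y + 1 \<le> X" by simp
  hence "p*(Y+1) \<le> p*X" by (rule mult_le_mono2)
  thus False using assms by (simp add: algebra_simps)
qed

lemma get_pair_swap:
  fixes p :: nat and S :: "(nat \<times> nat) set" and R :: "nat \<Rightarrow> nat \<Rightarrow> bool"
  assumes p: "p \<ge> 3" and fin: "finite S" and ne: "S \<noteq> {}"
    and box: "\<And>i j. (i,j) \<in> S \<Longrightarrow> i \<le> p+1"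
    and R: "R = (\<le>) \<or> R = (\<ge>)"
    and H: "\<And>i j. (i,j) \<in> S \<Longrightarrow> \<exists>i' j'. (i',j') \<in> S \<and> (i',j') \<noteq> (i,j) \<and> R (i+p*j) (i'+p*j')"
  shows "\<exists>c d. (d, c+1) \<in> S \<and> (d+p, c) \<in> S \<and> (\<forall>i j. (i,j) \<in> S \<longrightarrow> R (i+p*j) (d+p*(c+1)))"
proof -
  define S' where "S' = (\<lambda>(i,j). (j,i)) ` S"
  have mem: "(i,j) \<in> S' \<longleftrightarrow> (j,i) \<in> S" for i j by (auto simp: S'_def)
  have "\<exists>a b. (a+1, b) \<in> S' \<and> (a, b+p) \<in> S' \<and> (\<forall>i j. (i,j) \<in> S' \<longrightarrow> R (p*i+j) (p*(a+1)+b))"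
  proof (rule get_pair[OF p _ _ _ R])
    show "finite S'" using fin by (simp add: S'_def)
    show "S' \<noteq> {}" using ne by (simp add: S'_def)
    show "j \<le> p+1" if "(i,j) \<in> S'" for i j using box that by (simp add: mem)
    fix i j assume "(i,j) \<in> S'"
    hence "(j,i) \<in> S" by (simp add: mem)
    from H[OF this] obtain i' j' where "(i',j') \<in> S" "(i',j') \<noteq> (j,i)" "R (j+p*i) (i'+p*j')" by blast
    thus "\<exists>i' j'. (i',j') \<in> S' \<and> (i',j') \<noteq> (i,j) \<and> R (p*i+j) (p*i'+j')"
      by (intro exI[of _ j'] exI[of _ i']) (auto simp: mem add.commute)
  qed
  then obtain a b where "(a+1, b) \<in> S'" "(a, b+p) \<in> S'" "\<forall>i j. (i,j) \<in> S' \<longrightarrow> R (p*i+j) (p*(a+1)+b)" by blast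
  thus ?thesis by (intro exI[of _ a] exI[of _ b]) (auto simp: mem add.commute)
qed

lemma combi:
  fixes p :: nat and S :: "(nat \<times> nat) set"
  assumes p: "p \<ge> 3" and fin: "finite S" and ne: "S \<noteq> {}"
    and box: "\<And>i j. (i,j) \<in> S \<Longrightarrow> i \<le> p+1 \<and> j \<le> p+1"
    and H1: "\<And>i j. (i,j) \<in> S \<Longrightarrow> \<exists>i' j'. (i',j') \<in> S \<and> (i',j') \<noteq> (i,j) \<and> p*i+j \<le> p*i'+j'"
    and H2: "\<And>i j. (i,j) \<in> S \<Longrightarrow> \<exists>i' j'. (i',j') \<in> S \<and> (i',j') \<noteq> (i,j) \<and> i+p*j \<le> i'+p*j'"
    and H3: "\<And>i j. (i,j) \<in> S \<Longrightarrow> \<exists>i' j'. (i',j') \<in> S \<and> (i',j') \<noteq> (i,j) \<and> p*i+j \<ge> p*i'+j'"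
    and H4: "\<And>i j. (i,j) \<in> S \<Longrightarrow> \<exists>i' j'. (i',j') \<in> S \<and> (i',j') \<noteq> (i,j) \<and> i+p*j \<ge> i'+p*j'"
  shows "(p+1,0) \<in> S \<and> (0,p+1) \<in> S \<and> (\<forall>i j. (i,j) \<in> S \<longrightarrow>
           p*i+j \<le> p*(p+1) \<and> i+p*j \<le> p*(p+1) \<and> p+1 \<le> p*i+j \<and> p+1 \<le> i+p*j)"
proof -
  have box1: "\<And>i j. (i,j) \<in> S \<Longrightarrow> j \<le> p+1" and box2: "\<And>i j. (i,j) \<in> S \<Longrightarrow> i \<le> p+1" using box by auto
  have "\<exists>a b. (a+1, b) \<in> S \<and> (a, b+p) \<in> S \<and> (\<forall>i j. (i,j) \<in> S \<longrightarrow> p*i+j \<le> p*(a+1)+b)"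
    by (rule get_pair[OF p fin ne]) (use box1 H1 in auto)
  then obtain a b where A1: "(a+1, b) \<in> S" and A2: "(a, b+p) \<in> S" and M1: "\<And>i j. (i,j) \<in> S \<Longrightarrow> p*i+j \<le> p*(a+1)+b"
    by blast
  have "\<exists>c d. (d, c+1) \<in> S \<and> (d+p, c) \<in> S \<and> (\<forall>i j. (i,j) \<in> S \<longrightarrow> i+p*j \<le> d+p*(c+1))"
    by (rule get_pair_swap[OF p fin ne]) (use box2 H2 in auto)
  then obtain c d where C1: "(d, c+1) \<in> S" and C2: "(d+p, c) \<in> S" and M2: "\<And>i j. (i,j) \<in> S \<Longrightarrow> i+p*j \<le> d+p*(c+1)"
    by blast
  have b1: "b \<le> 1" using box[OF A2] by simp
  have d1: "d \<le> 1" using box[OF C2] by simp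
  have a1: "a \<le> p" using box[OF A1] by simp
  have c1: "c \<le> p" using box[OF C1] by simp
  have E1: "p*(b+p) + a \<le> p*(c+1) + d" using M2[OF A2] by (simp add: algebra_simps)
  have E2: "p*(d+p) + c \<le> p*(a+1) + b" using M1[OF C2] by simp
  have G1: "d + p \<le> a + 1" by (rule mulcancel[OF E2]) (use b1 p in linarith)
  have G2: "b + p \<le> c + 1" by (rule mulcancel[OF E1]) (use d1 p in linarith)
  have cd: "d = 0"
  proof (rule ccontr)
    assume "d \<noteq> 0" hence "d = 1" using d1 by simp
    hence "a = p" using G1 a1 by simp
    have "c \<le> b" using E2 \<open>d = 1\<close> \<open>a = p\<close> by (simp add: algebra_simps)
    thus False using G2 b1 p by linarith
  qed
  have cb: "b = 0"
  proof (rule ccontr)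
    assume "b \<noteq> 0" hence "b = 1" using b1 by simp
    hence "c = p" using G2 c1 by simp
    have "a + 1 \<ge> p" using G1 by simp
    thus False using E1 \<open>b = 1\<close> \<open>c = p\<close> cd p by (simp add: algebra_simps)
  qed
  have ca: "a = p"
  proof (rule ccontr)
    assume "a \<noteq> p" hence "a + 1 = p" using G1 a1 cd by simp
    have "p*(a+1) = p*p" using \<open>a + 1 = p\<close> by simp
    hence "c \<le> 0" using E2 cd cb by simp
    thus False using G2 p cb by linarith
  qed
  have cc: "c = p"
  proof (rule ccontr)
    assume "c \<noteq> p" hence "c + 1 = p" using G2 c1 cb by simp
    hence "p*(c+1) = p*p" by simp
    thus False using E1 ca cb cd p by (simp add: algebra_simps)
  qed
  have U1: "p*i+j \<le> p*(p+1)" and U2: "i+p*j \<le> p*(p+1)" if "(i,j) \<in> S" for i j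
    using M1[OF that] M2[OF that] ca cb cc cd by (simp_all add: algebra_simps)
  have "\<exists>a b. (a+1, b) \<in> S \<and> (a, b+p) \<in> S \<and> (\<forall>i j. (i,j) \<in> S \<longrightarrow> p*i+j \<ge> p*(a+1)+b)"
    by (rule get_pair[OF p fin ne]) (use box1 H3 in auto)
  then obtain a' b' where A1': "(a'+1, b') \<in> S" and A2': "(a', b'+p) \<in> S" and N1: "\<And>i j. (i,j) \<in> S \<Longrightarrow> p*(a'+1)+b' \<le> p*i+j"
    by blast
  have "\<exists>c d. (d, c+1) \<in> S \<and> (d+p, c) \<in> S \<and> (\<forall>i j. (i,j) \<in> S \<longrightarrow> i+p*j \<ge> d+p*(c+1))"
    by (rule get_pair_swap[OF p fin ne]) (use box2 H4 in auto)
  then obtain c' d' where C1': "(d', c'+1) \<in> S" and C2': "(d'+p, c') \<in> S" and N2: "\<And>i j. (i,j) \<in> S \<Longrightarrow> d'+p*(c'+1) \<le> i+p*j"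
    by blast
  have b1': "b' \<le> 1" using box[OF A2'] by simp
  have d1': "d' \<le> 1" using box[OF C2'] by simp
  have F1: "p*(a'+1) + b' \<le> p*d' + (c'+1)" using N1[OF C1'] by simp
  have F2: "d' + p*(c'+1) \<le> (a'+1) + p*b'" using N2[OF A1'] by simp
  have V1: "a' + p*(b'+p) \<le> p*(p+1)" using U2[OF A2'] .
  have V2: "p*(d'+p) + c' \<le> p*(p+1)" using U1[OF C2'] .
  have gb: "b' = 1"
  proof (rule ccontr)
    assume "b' \<noteq> 1" hence b0: "b' = 0" using b1' by simp
    show False
    proof (cases "d' = 0")
      case True
      have "p*(a'+1) \<le> c'+1" using F1 b0 True by simp
      moreover have "p*(c'+1) \<le> a'+1" using F2 b0 True by simp
      moreover have "1*(c'+1) \<le> p*(c'+1)" using p by (intro mult_le_mono1) simp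
      moreover have "3*(a'+1) \<le> p*(a'+1)" using p by (intro mult_le_mono1) simp
      ultimately show False by (simp add: algebra_simps)
    next
      case False
      hence "d' = 1" using d1' by simp
      hence "c' = 0" using V2 by (simp add: algebra_simps)
      hence pa: "p*a' \<le> 1" using F1 b0 \<open>d' = 1\<close> by (simp add: algebra_simps)
      have "a' = 0"
      proof (rule ccontr)
        assume "a' \<noteq> 0" hence "p*1 \<le> p*a'" by (intro mult_le_mono2) simp
        thus False using pa p by linarith
      qed
      thus False using F2 b0 \<open>d' = 1\<close> \<open>c' = 0\<close> p by simp
    qed
  qed
  have ga: "a' = 0" using V1 gb by (simp add: algebra_simps)
  have gd: "d' = 1"
  proof (rule ccontr)
    assume "d' \<noteq> 1" hence d0: "d' = 0" using d1' by simp
    have "p + 1 \<le> c' + 1" using F1 ga gb d0 by simp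
    hence h0: "p*(p+1) \<le> p*(c'+1)" by (rule mult_le_mono2)
    have h1: "p*(c'+1) \<le> 1 + p" using F2 ga gb d0 by simp
    have h2: "3*3 \<le> p*p" using mult_le_mono[OF p p] by simp
    have "p*(p+1) = p*p + p" by (simp add: algebra_simps)
    thus False using h0 h1 h2 by linarith
  qed
  have gc: "c' = 0" using V2 gd by (simp add: algebra_simps)
  show ?thesis
  proof (intro conjI allI impI)
    show "(p+1,0) \<in> S" using A1 ca cb by simp
    show "(0,p+1) \<in> S" using C1 cc cd by simp
    fix i j assume ij: "(i,j) \<in> S"
    show "p*i+j \<le> p*(p+1)" "i+p*j \<le> p*(p+1)" using U1[OF ij] U2[OF ij] by auto
    show "p+1 \<le> p*i+j" using N1[OF ij] ga gb by simp
    show "p+1 \<le> i+p*j" using N2[OF ij] gc gd by simp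
  qed
qed

lemma norm_pow_exp:
  fixes z :: complex assumes "z \<noteq> 0"
  shows "norm z ^ n = exp (real n * ln (norm z))"
proof -
  have "norm z > 0" using assms by simp
  thus ?thesis by (simp add: powr_realpow[symmetric] powr_def mult.commute)
qed

lemma dominance:
  fixes X Y :: "real \<Rightarrow> complex" and c :: "nat \<Rightarrow> nat \<Rightarrow> complex" and S :: "(nat \<times> nat) set"
  assumes fin: "finite S" and cnz: "\<And>i j. (i,j) \<in> S \<Longrightarrow> c i j \<noteq> 0"
    and zero: "eventually (\<lambda>y. (\<Sum>(i,j)\<in>S. c i j * X y ^ i * Y y ^ j) = 0) (at_right 0)"
    and nz: "eventually (\<lambda>y. X y \<noteq> 0 \<and> Y y \<noteq> 0) (at_right 0)"
    and la: "((\<lambda>y. y * ln (norm (X y))) \<longlongrightarrow> a) (at_right 0)"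
    and lb: "((\<lambda>y. y * ln (norm (Y y))) \<longlongrightarrow> b) (at_right 0)"
    and P: "(i0,j0) \<in> S"
  shows "\<exists>i j. (i,j) \<in> S \<and> (i,j) \<noteq> (i0,j0) \<and> a*i0 + b*j0 \<le> a*i + b*j"
proof (rule ccontr)
  assume "\<not> ?thesis"
  hence lt: "a*i + b*j < a*i0 + b*j0" if "(i,j) \<in> S - {(i0,j0)}" for i j using that by force
  define T where "T = (\<lambda>y. c i0 j0 * X y ^ i0 * Y y ^ j0)"
  define \<rho> where "\<rho> = (\<lambda>(i,j) y. (c i j * X y ^ i * Y y ^ j) / T y)"
  define S' where "S' = S - {(i0,j0)}"
  have c0: "c i0 j0 \<noteq> 0" using cnz P by simp
  have rho0: "(\<rho> s \<longlongrightarrow> 0) (at_right 0)" if s: "s \<in> S'" for s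
  proof -
    obtain i j where sij: "s = (i,j)" by (cases s)
    define E where "E = (\<lambda>y. (real i - real i0) * ln (norm (X y)) + (real j - real j0) * ln (norm (Y y)))"
    have "((\<lambda>y. y * E y) \<longlongrightarrow> (real i - real i0) * a + (real j - real j0) * b) (at_right 0)"
    proof -
      have "((\<lambda>y. (real i - real i0) * (y * ln (norm (X y))) + (real j - real j0) * (y * ln (norm (Y y)))) \<longlongrightarrow> (real i - real i0) * a + (real j - real j0) * b) (at_right 0)"
        by (intro tendsto_add tendsto_mult tendsto_const la lb)
      thus ?thesis by (simp add: E_def algebra_simps)
    qed
    moreover have neg: "(real i - real i0) * a + (real j - real j0) * b < 0"
      using lt[of i j] s sij by (simp add: S'_def algebra_simps)
    ultimately have "filterlim (\<lambda>y. (y * E y) * inverse y) at_bot (at_right 0)"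
      by (rule filterlim_tendsto_neg_mult_at_bot[OF _ _ filterlim_inverse_at_top_right])
    moreover have "eventually (\<lambda>y. (y * E y) * inverse y = E y) (at_right 0)"
      using eventually_at_right_less[of 0] by eventually_elim simp
    ultimately have "filterlim E at_bot (at_right 0)" by (simp add: filterlim_cong)
    hence "((\<lambda>y. exp (E y)) \<longlongrightarrow> 0) (at_right 0)"
      by (rule filterlim_compose[OF exp_at_bot])
    hence lim: "((\<lambda>y. (norm (c i j) / norm (c i0 j0)) * exp (E y)) \<longlongrightarrow> (norm (c i j) / norm (c i0 j0)) * 0) (at_right 0)"
      by (intro tendsto_mult tendsto_const)
    have "eventually (\<lambda>y. norm (\<rho> s y) = (norm (c i j) / norm (c i0 j0)) * exp (E y)) (at_right 0)"
      using nz
    proof eventually_elim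
      case (elim y)
      hence X: "X y \<noteq> 0" and Y: "Y y \<noteq> 0" by auto
      have "norm (\<rho> s y) = (norm (c i j) * norm (X y) ^ i * norm (Y y) ^ j) / (norm (c i0 j0) * norm (X y) ^ i0 * norm (Y y) ^ j0)"
        by (simp add: \<rho>_def sij T_def norm_mult norm_divide norm_power)
      also have "\<dots> = (norm (c i j) / norm (c i0 j0)) * (exp (real i * ln (norm (X y))) * exp (real j * ln (norm (Y y))) / (exp (real i0 * ln (norm (X y))) * exp (real j0 * ln (norm (Y y)))))"
        by (simp add: norm_pow_exp[OF X] norm_pow_exp[OF Y])
      also have "exp (real i * ln (norm (X y))) * exp (real j * ln (norm (Y y))) / (exp (real i0 * ln (norm (X y))) * exp (real j0 * ln (norm (Y y)))) = exp (E y)"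
        by (simp add: E_def exp_add[symmetric] exp_diff[symmetric] algebra_simps)
      finally show ?case .
    qed
    hence "((\<lambda>y. norm (\<rho> s y)) \<longlongrightarrow> 0) (at_right 0)"
      using lim by (simp add: tendsto_cong)
    thus ?thesis by (simp add: tendsto_norm_zero_iff)
  qed
  have "((\<lambda>y. \<Sum>s\<in>S'. \<rho> s y) \<longlongrightarrow> 0) (at_right 0)"
    by (rule tendsto_null_sum) (use rho0 in auto)
  hence "eventually (\<lambda>y. norm (\<Sum>s\<in>S'. \<rho> s y) < 1) (at_right 0)"
  proof -
    assume h: "((\<lambda>y. \<Sum>s\<in>S'. \<rho> s y) \<longlongrightarrow> 0) (at_right 0)"
    have "((\<lambda>y. norm (\<Sum>s\<in>S'. \<rho> s y)) \<longlongrightarrow> 0) (at_right 0)" using tendsto_norm_zero[OF h] .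
    thus ?thesis by (rule order_tendstoD) simp
  qed
  hence "eventually (\<lambda>y. False) (at_right (0::real))" using zero nz
  proof eventually_elim
    case (elim y)
    hence X: "X y \<noteq> 0" and Y: "Y y \<noteq> 0" by auto
    have T0: "T y \<noteq> 0" using X Y c0 by (simp add: T_def)
    have "(\<Sum>(i,j)\<in>S. c i j * X y ^ i * Y y ^ j) = T y + (\<Sum>(i,j)\<in>S'. c i j * X y ^ i * Y y ^ j)"
      unfolding S'_def using fin P by (subst sum.remove[of S "(i0,j0)"]) (auto simp: T_def)
    also have "(\<Sum>(i,j)\<in>S'. c i j * X y ^ i * Y y ^ j) = T y * (\<Sum>s\<in>S'. \<rho> s y)"
      unfolding sum_distrib_left by (intro sum.cong refl) (use T0 in \<open>auto simp: \<rho>_def\<close>)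
    finally have "(\<Sum>(i,j)\<in>S. c i j * X y ^ i * Y y ^ j) = T y * (1 + (\<Sum>s\<in>S'. \<rho> s y))"
      by (simp add: algebra_simps)
    moreover have "1 + (\<Sum>s\<in>S'. \<rho> s y) \<noteq> 0"
    proof
      assume "1 + (\<Sum>s\<in>S'. \<rho> s y) = 0"
      hence "(\<Sum>s\<in>S'. \<rho> s y) = -1" by (simp add: add_eq_0_iff)
      thus False using elim by simp
    qed
    ultimately show False using elim T0 by simp
  qed
  thus False by (simp add: trivial_limit_at_right_real)
qed

lemma ord_frac:
  fixes j n :: nat
  assumes cp: "coprime j n" and n: "n > 0"
  shows "exp (2 * of_real pi * \<i> * of_real (real j / real n)) ^ k = 1 \<longleftrightarrow> n dvd k"
proof -
  have "exp (2 * of_real pi * \<i> * of_real (real j / real n)) ^ k = exp (of_nat k * (2 * of_real pi * \<i> * of_real (real j / real n)))"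
    by (rule exp_of_nat_mult[symmetric])
  also have "of_nat k * (2 * of_real pi * \<i> * of_real (real j / real n)) = 2 * of_real pi * \<i> * of_nat (k * j) / (of_nat n :: complex)"
    by (simp add: field_simps)
  finally have "exp (2 * of_real pi * \<i> * of_real (real j / real n)) ^ k = 1 \<longleftrightarrow> n dvd (k * j)"
    using complex_root_unity_eq_1[of n "k * j"] n by simp
  also have "\<dots> \<longleftrightarrow> n dvd k" using cp by (simp add: coprime_dvd_mult_left_iff coprime_commute)
  finally show ?thesis .
qed

lemma path_lim:
  fixes \<sigma> :: "real \<Rightarrow> complex" and j n :: nat
  assumes c: "c > 0" and n: "n > 0" and cp: "coprime j n"
    and Re: "\<And>y. Re (\<sigma> y) = real j / real n" and Im: "\<And>y. Im (\<sigma> y) = c * y"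
  shows "((\<lambda>y. y * Lz (\<sigma> y)) \<longlongrightarrow> Ibase / (2 * pi * c * (real n)^2)) (at_right 0)"
proof -
  define \<zeta> where "\<zeta> = exp (2 * of_real pi * \<i> * of_real (real j / real n))"
  have ord: "\<And>k. \<zeta>^k = 1 \<longleftrightarrow> n dvd k" unfolding \<zeta>_def by (rule ord_frac[OF cp n])
  have c2: "2 * pi * c > 0" using c by simp
  have "((\<lambda>y. (2 * pi * c * y) * Sz \<zeta> (2 * pi * c * y)) \<longlongrightarrow> Ibase / (real n)^2) (at_right 0)"
    using filterlim_compose[OF main_lim[OF n ord] scale_at_right[OF c2]] by (simp add: o_def)
  hence "((\<lambda>y. (1 / (2 * pi * c)) * ((2 * pi * c * y) * Sz \<zeta> (2 * pi * c * y))) \<longlongrightarrow> (1 / (2 * pi * c)) * (Ibase / (real n)^2)) (at_right 0)"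
    by (intro tendsto_mult tendsto_const)
  moreover have "(1 / (2 * pi * c)) * ((2 * pi * c * y) * Sz \<zeta> (2 * pi * c * y)) = y * Lz (\<sigma> y)" for y
  proof -
    have "Lz (\<sigma> y) = Sz \<zeta> (2 * pi * c * y)" by (simp only: Lz_def Re Im \<zeta>_def mult.assoc)
    moreover have "(1 / (2 * pi * c)) * ((2 * pi * c * y) * S) = y * S" for S using c by (simp add: field_simps)
    ultimately show ?thesis by simp
  qed
  moreover have "(1 / (2 * pi * c)) * (Ibase / (real n)^2) = Ibase / (2 * pi * c * (real n)^2)" by simp
  ultimately show ?thesis by simp
qed

lemma gfun_log:
  assumes "Im \<tau> > 0"
  shows "gfun \<tau> \<noteq> 0 \<and> ln (norm (gfun \<tau>)) = 2 * Lz (2*\<tau>) + 4 * Lz (5*\<tau>) - 4 * Lz \<tau> - 2 * Lz (10*\<tau>)"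
proof -
  have i1: "Im \<tau> > 0" and i2: "Im (2*\<tau>) > 0" and i5: "Im (5*\<tau>) > 0" and i10: "Im (10*\<tau>) > 0" using assms by simp_all
  note e1 = eta_norm[OF i1] and e2 = eta_norm[OF i2] and e5 = eta_norm[OF i5] and e10 = eta_norm[OF i10]
  have nz: "dedekind_eta \<tau> \<noteq> 0" "dedekind_eta (2*\<tau>) \<noteq> 0" "dedekind_eta (5*\<tau>) \<noteq> 0" "dedekind_eta (10*\<tau>) \<noteq> 0"
    using e1 e2 e5 e10 by auto
  have g0: "gfun \<tau> \<noteq> 0" using nz by (simp add: gfun_def)
  have "ln (norm (gfun \<tau>)) = 2 * ln (norm (dedekind_eta (2*\<tau>))) + 4 * ln (norm (dedekind_eta (5*\<tau>)))
      - 4 * ln (norm (dedekind_eta \<tau>)) - 2 * ln (norm (dedekind_eta (10*\<tau>)))"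
    using nz by (simp add: gfun_def norm_divide norm_mult norm_power ln_div ln_mult ln_realpow)
  also have "\<dots> = 2 * Lz (2*\<tau>) + 4 * Lz (5*\<tau>) - 4 * Lz \<tau> - 2 * Lz (10*\<tau>)"
    using e1 e2 e5 e10 by (simp add: algebra_simps)
  finally show ?thesis using g0 by simp
qed

lemma gfun_lim:
  fixes \<tau> :: "real \<Rightarrow> complex"
  assumes Im: "\<And>y. y > 0 \<Longrightarrow> Im (\<tau> y) > 0"
    and l1: "((\<lambda>y. y * Lz (\<tau> y)) \<longlongrightarrow> A1) (at_right 0)"
    and l2: "((\<lambda>y. y * Lz (2 * \<tau> y)) \<longlongrightarrow> A2) (at_right 0)"
    and l5: "((\<lambda>y. y * Lz (5 * \<tau> y)) \<longlongrightarrow> A5) (at_right 0)"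
    and l10: "((\<lambda>y. y * Lz (10 * \<tau> y)) \<longlongrightarrow> A10) (at_right 0)"
  shows "((\<lambda>y. y * ln (norm (gfun (\<tau> y)))) \<longlongrightarrow> 2*A2 + 4*A5 - 4*A1 - 2*A10) (at_right 0)"
proof -
  have "((\<lambda>y. 2 * (y * Lz (2 * \<tau> y)) + 4 * (y * Lz (5 * \<tau> y)) - 4 * (y * Lz (\<tau> y)) - 2 * (y * Lz (10 * \<tau> y))) \<longlongrightarrow> 2*A2 + 4*A5 - 4*A1 - 2*A10) (at_right 0)"
    by (intro tendsto_intros l1 l2 l5 l10)
  moreover have "eventually (\<lambda>y. 2 * (y * Lz (2 * \<tau> y)) + 4 * (y * Lz (5 * \<tau> y)) - 4 * (y * Lz (\<tau> y)) - 2 * (y * Lz (10 * \<tau> y)) = y * ln (norm (gfun (\<tau> y)))) (at_right 0)"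
    using eventually_at_right_less[of 0]
  proof eventually_elim
    case (elim y)
    have eq: "ln (norm (gfun (\<tau> y))) = 2 * Lz (2 * \<tau> y) + 4 * Lz (5 * \<tau> y) - 4 * Lz (\<tau> y) - 2 * Lz (10 * \<tau> y)"
      using gfun_log[OF Im[OF elim]] by blast
    show ?case unfolding eq by (simp add: algebra_simps)
  qed
  ultimately show ?thesis by (rule Lim_transform_eventually)
qed

lemma gfun_nz: "Im \<tau> > 0 \<Longrightarrow> gfun \<tau> \<noteq> 0" using gfun_log by blast

lemma gpath:
  fixes x0 s :: real and j1 j2 j5 j10 n1 n2 n5 n10 :: nat
  assumes s: "s > 0" and n: "n1 > 0" "n2 > 0" "n5 > 0" "n10 > 0"
    and cp: "coprime j1 n1" "coprime j2 n2" "coprime j5 n5" "coprime j10 n10"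
    and r: "s * x0 = real j1 / real n1" "2 * s * x0 = real j2 / real n2"
           "5 * s * x0 = real j5 / real n5" "10 * s * x0 = real j10 / real n10"
  shows "((\<lambda>y. y * ln (norm (gfun (of_real s * (of_real x0 + \<i> * of_real y))))) \<longlongrightarrow>
           2 * (Ibase / (2 * pi * (2 * s) * (real n2)^2)) + 4 * (Ibase / (2 * pi * (5 * s) * (real n5)^2))
           - 4 * (Ibase / (2 * pi * s * (real n1)^2)) - 2 * (Ibase / (2 * pi * (10 * s) * (real n10)^2))) (at_right 0)"
proof (rule gfun_lim)
  show "0 < Im (of_real s * (of_real x0 + \<i> * of_real y))" if "y > 0" for y using s that by simp
  show "((\<lambda>y. y * Lz (of_real s * (of_real x0 + \<i> * of_real y))) \<longlongrightarrow> Ibase / (2 * pi * s * (real n1)^2)) (at_right 0)"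
    by (rule path_lim[OF s n(1) cp(1)]) (use r in simp_all)
  show "((\<lambda>y. y * Lz (2 * (of_real s * (of_real x0 + \<i> * of_real y)))) \<longlongrightarrow> Ibase / (2 * pi * (2 * s) * (real n2)^2)) (at_right 0)"
    by (rule path_lim[OF _ n(2) cp(2)]) (use r s in simp_all)
  show "((\<lambda>y. y * Lz (5 * (of_real s * (of_real x0 + \<i> * of_real y)))) \<longlongrightarrow> Ibase / (2 * pi * (5 * s) * (real n5)^2)) (at_right 0)"
    by (rule path_lim[OF _ n(3) cp(3)]) (use r s in simp_all)
  show "((\<lambda>y. y * Lz (10 * (of_real s * (of_real x0 + \<i> * of_real y)))) \<longlongrightarrow> Ibase / (2 * pi * (10 * s) * (real n10)^2)) (at_right 0)"
    by (rule path_lim[OF _ n(4) cp(4)]) (use r s in simp_all)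
qed

lemma gpath2:
  fixes x0 s L :: real and ja jb jc jd na nb nc nd :: nat
  assumes s: "s > 0" and n: "na > 0" "nb > 0" "nc > 0" "nd > 0"
    and cp: "coprime ja na" "coprime jb nb" "coprime jc nc" "coprime jd nd"
    and r: "s * x0 = real ja / real na" "2 * s * x0 = real jb / real nb"
           "5 * s * x0 = real jc / real nc" "10 * s * x0 = real jd / real nd"
    and L: "L = 2 * (Ibase / (2 * pi * (2 * s) * (real nb)^2)) + 4 * (Ibase / (2 * pi * (5 * s) * (real nc)^2))
           - 4 * (Ibase / (2 * pi * s * (real na)^2)) - 2 * (Ibase / (2 * pi * (10 * s) * (real nd)^2))"
  shows "((\<lambda>y. y * ln (norm (gfun (of_real s * (of_real x0 + \<i> * of_real y))))) \<longlongrightarrow> L) (at_right 0)"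
  unfolding L by (rule gpath[OF s n cp r])

lemma wpos:
  fixes \<kappa> a b :: real and uu vv i0 j0 i j :: nat
  assumes "\<kappa> > 0" "a = \<kappa> * real uu" "b = \<kappa> * real vv" "a * real i0 + b * real j0 \<le> a * real i + b * real j"
  shows "uu * i0 + vv * j0 \<le> uu * i + vv * j"
proof -
  have "\<kappa> * real (uu * i0 + vv * j0) \<le> \<kappa> * real (uu * i + vv * j)" using assms(2-4) by (simp add: algebra_simps)
  hence "real (uu * i0 + vv * j0) \<le> real (uu * i + vv * j)" using assms(1) by simp
  thus ?thesis by linarith
qed

lemma wneg:
  fixes \<kappa> a b :: real and uu vv i0 j0 i j :: nat
  assumes "\<kappa> < 0" "a = \<kappa> * real uu" "b = \<kappa> * real vv" "a * real i0 + b * real j0 \<le> a * real i + b * real j"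
  shows "uu * i0 + vv * j0 \<ge> uu * i + vv * j"
proof -
  have "\<kappa> * real (uu * i0 + vv * j0) \<le> \<kappa> * real (uu * i + vv * j)" using assms(2-4) by (simp add: algebra_simps)
  hence "real (uu * i0 + vv * j0) \<ge> real (uu * i + vv * j)" using assms(1) by (simp add: mult_le_cancel_left)
  thus ?thesis by linarith
qed

theorem theorem4p7:
  fixes p :: nat and C :: "nat \<Rightarrow> nat \<Rightarrow> rat"
  assumes "prime p" and "odd p" and "p \<noteq> 5"
    and "\<exists>i\<le>p+1. \<exists>j\<le>p+1. C i j \<noteq> 0"
    and "\<And>\<tau>. Im \<tau> > 0 \<Longrightarrow>
            eval_bipoly (p+1) C (gfun \<tau>) (gfun (of_nat p * \<tau>)) = 0"
  shows "(C (p+1) 0 \<noteq> 0 \<and> C 0 (p+1) \<noteq> 0) \<and>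
         (\<forall>j\<in>{1..p+1}. C (p+1) j = 0 \<and> C j (p+1) = 0) \<and>
         (\<forall>j\<in>{0..p}. C 0 j = 0 \<and> C j 0 = 0)"
proof -
  note pr = assms(1) and hyp = assms(5)
  have p2: "p \<ge> 2" using prime_ge_2_nat[OF pr] .
  have p3: "p \<ge> 3" using p2 assms(2) by (cases "p = 2") auto
  have pp: "real p > 0" using p3 by simp
  have ndvd2: "\<not> p dvd 2" using p3 by (auto dest: dvd_imp_le)
  have ndvd5: "\<not> p dvd 5"
  proof
    assume d: "p dvd 5"
    hence "p \<le> 5" by (auto dest: dvd_imp_le)
    hence "p = 3 \<or> p = 4 \<or> p = 5" using p3 by auto
    thus False using d assms(3) by auto
  qed
  have c2p: "coprime 2 p" using prime_imp_coprime[OF pr ndvd2] by (simp add: coprime_commute)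
  have c5p: "coprime 5 p" using prime_imp_coprime[OF pr ndvd5] by (simp add: coprime_commute)
  have c25: "coprime (2::nat) 5" by (rule prime_imp_coprime[OF two_is_prime_nat]) simp
  have c10p: "coprime 10 p" using c2p c5p coprime_mult_left_iff[of 2 5 p] by simp
  have cp5: "coprime p 5" using c5p by (simp add: coprime_commute)
  have c2p5: "coprime (2*p) 5" using c25 cp5 by simp
  have c25p: "coprime 2 (5*p)" using c25 c2p by simp
  have c15p: "coprime 1 (5*p)" by simp
  define S where "S = {(i,j). i \<le> p+1 \<and> j \<le> p+1 \<and> C i j \<noteq> 0}"
  have finS: "finite S"
  proof (rule finite_subset)
    show "S \<subseteq> {..p+1} \<times> {..p+1}" by (auto simp: S_def)
  qed simp
  have neS: "S \<noteq> {}" using assms(4) by (auto simp: S_def)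
  have boxS: "\<And>i j. (i,j) \<in> S \<Longrightarrow> i \<le> p+1 \<and> j \<le> p+1" by (auto simp: S_def)
  have cnz: "\<And>i j. (i,j) \<in> S \<Longrightarrow> (of_rat (C i j) :: complex) \<noteq> 0" by (auto simp: S_def)
  have evS: "eval_bipoly (p+1) C x y = (\<Sum>(i,j)\<in>S. of_rat (C i j) * x ^ i * y ^ j)" for x y
  proof -
    have "eval_bipoly (p+1) C x y = (\<Sum>(i,j)\<in>{..p+1} \<times> {..p+1}. of_rat (C i j) * x ^ i * y ^ j)"
      by (simp only: eval_bipoly_def sum.cartesian_product)
    also have "\<dots> = (\<Sum>(i,j)\<in>S. of_rat (C i j) * x ^ i * y ^ j)"
      by (rule sum.mono_neutral_right) (auto simp: S_def)
    finally show ?thesis .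
  qed
  have D: "\<exists>i j. (i,j) \<in> S \<and> (i,j) \<noteq> (i0,j0) \<and> a * real i0 + b * real j0 \<le> a * real i + b * real j"
    if la: "((\<lambda>y. y * ln (norm (gfun (of_real 1 * (of_real x0 + \<i> * of_real y))))) \<longlongrightarrow> a) (at_right 0)"
    and lb: "((\<lambda>y. y * ln (norm (gfun (of_real (real p) * (of_real x0 + \<i> * of_real y))))) \<longlongrightarrow> b) (at_right 0)"
    and P: "(i0,j0) \<in> S" for x0 a b i0 j0
  proof (rule dominance[OF finS cnz _ _ la lb P])
    show "eventually (\<lambda>y. (\<Sum>(i,j)\<in>S. of_rat (C i j) * gfun (of_real 1 * (of_real x0 + \<i> * of_real y)) ^ i
              * gfun (of_real (real p) * (of_real x0 + \<i> * of_real y)) ^ j) = 0) (at_right 0)"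
      using eventually_at_right_less[of 0]
    proof eventually_elim
      case (elim y)
      have e: "eval_bipoly (p+1) C (gfun (of_real x0 + \<i> * of_real y)) (gfun (of_nat p * (of_real x0 + \<i> * of_real y))) = 0"
        by (rule hyp) (use elim in simp)
      show ?case using e unfolding evS by simp
    qed
    show "eventually (\<lambda>y. gfun (of_real 1 * (of_real x0 + \<i> * of_real y)) \<noteq> 0 \<and>
              gfun (of_real (real p) * (of_real x0 + \<i> * of_real y)) \<noteq> 0) (at_right 0)"
      using eventually_at_right_less[of 0]
    proof eventually_elim
      case (elim y)
      show ?case using elim pp by (intro conjI gfun_nz) simp_all
    qed
  qed
  have pi0: "pi > 0" by simp
  have H1: "\<exists>i j. (i,j) \<in> S \<and> (i,j) \<noteq> (i0,j0) \<and> p*i0+j0 \<le> p*i+j" if P: "(i0,j0) \<in> S" for i0 j0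
  proof -
    define \<kappa> where "\<kappa> = - (12/5) * Ibase / (2 * pi * real p)"
    have k: "\<kappa> > 0" using Ibase_neg pp by (simp add: \<kappa>_def divide_pos_neg mult_neg_pos field_simps)
    have la: "((\<lambda>y. y * ln (norm (gfun (of_real 1 * (of_real 0 + \<i> * of_real y))))) \<longlongrightarrow> \<kappa> * real p) (at_right 0)"
      by (rule gpath2[where ja=0 and na=1 and jb=0 and nb=1 and jc=0 and nc=1 and jd=0 and nd=1]) (use pp in \<open>simp_all add: \<kappa>_def field_simps\<close>)
    have lb: "((\<lambda>y. y * ln (norm (gfun (of_real (real p) * (of_real 0 + \<i> * of_real y))))) \<longlongrightarrow> \<kappa> * real 1) (at_right 0)"
      by (rule gpath2[where ja=0 and na=1 and jb=0 and nb=1 and jc=0 and nc=1 and jd=0 and nd=1]) (use pp in \<open>simp_all add: \<kappa>_def field_simps\<close>)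
    from D[OF la lb P] obtain i j where ij: "(i,j) \<in> S" "(i,j) \<noteq> (i0,j0)"
      "\<kappa> * real p * real i0 + \<kappa> * real 1 * real j0 \<le> \<kappa> * real p * real i + \<kappa> * real 1 * real j" by blast
    have "p*i0 + 1*j0 \<le> p*i + 1*j" by (rule wpos[OF k refl refl ij(3)])
    thus ?thesis using ij by auto
  qed
  have H2: "\<exists>i j. (i,j) \<in> S \<and> (i,j) \<noteq> (i0,j0) \<and> i0+p*j0 \<le> i+p*j" if P: "(i0,j0) \<in> S" for i0 j0
  proof -
    define \<kappa> where "\<kappa> = - (12/5) * Ibase / (2 * pi * (real p)^2)"
    have k: "\<kappa> > 0" using Ibase_neg pp by (simp add: \<kappa>_def divide_pos_neg mult_neg_pos field_simps)
    have la: "((\<lambda>y. y * ln (norm (gfun (of_real 1 * (of_real (1 / real p) + \<i> * of_real y))))) \<longlongrightarrow> \<kappa> * real 1) (at_right 0)"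
      by (rule gpath2[where ja=1 and na=p and jb=2 and nb=p and jc=5 and nc=p and jd=10 and nd=p]) (use pp c2p c5p c10p in \<open>simp_all add: \<kappa>_def field_simps\<close>)
    have lb: "((\<lambda>y. y * ln (norm (gfun (of_real (real p) * (of_real (1 / real p) + \<i> * of_real y))))) \<longlongrightarrow> \<kappa> * real p) (at_right 0)"
      by (rule gpath2[where ja=1 and na=1 and jb=2 and nb=1 and jc=5 and nc=1 and jd=10 and nd=1]) (use pp in \<open>simp_all add: \<kappa>_def field_simps power2_eq_square\<close>)
    from D[OF la lb P] obtain i j where ij: "(i,j) \<in> S" "(i,j) \<noteq> (i0,j0)"
      "\<kappa> * real 1 * real i0 + \<kappa> * real p * real j0 \<le> \<kappa> * real 1 * real i + \<kappa> * real p * real j" by blast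
    have "1*i0 + p*j0 \<le> 1*i + p*j" by (rule wpos[OF k refl refl ij(3)])
    thus ?thesis using ij by auto
  qed
  have H3: "\<exists>i j. (i,j) \<in> S \<and> (i,j) \<noteq> (i0,j0) \<and> p*i0+j0 \<ge> p*i+j" if P: "(i0,j0) \<in> S" for i0 j0
  proof -
    define \<kappa> where "\<kappa> = (12/25) * Ibase / (2 * pi * real p)"
    have k: "\<kappa> < 0" using Ibase_neg pp by (simp add: \<kappa>_def divide_neg_pos mult_pos_neg field_simps)
    have la: "((\<lambda>y. y * ln (norm (gfun (of_real 1 * (of_real (1 / 5) + \<i> * of_real y))))) \<longlongrightarrow> \<kappa> * real p) (at_right 0)"
      by (rule gpath2[where ja=1 and na=5 and jb=2 and nb=5 and jc=1 and nc=1 and jd=2 and nd=1]) (use pp c25 in \<open>simp_all add: \<kappa>_def field_simps\<close>)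
    have lb: "((\<lambda>y. y * ln (norm (gfun (of_real (real p) * (of_real (1 / 5) + \<i> * of_real y))))) \<longlongrightarrow> \<kappa> * real 1) (at_right 0)"
      by (rule gpath2[where ja=p and na=5 and jb="2*p" and nb=5 and jc=p and nc=1 and jd="2*p" and nd=1]) (use pp cp5 c2p5 in \<open>simp_all add: \<kappa>_def field_simps\<close>)
    from D[OF la lb P] obtain i j where ij: "(i,j) \<in> S" "(i,j) \<noteq> (i0,j0)"
      "\<kappa> * real p * real i0 + \<kappa> * real 1 * real j0 \<le> \<kappa> * real p * real i + \<kappa> * real 1 * real j" by blast
    have "p*i0 + 1*j0 \<ge> p*i + 1*j" by (rule wneg[OF k refl refl ij(3)])
    thus ?thesis using ij by auto
  qed
  have H4: "\<exists>i j. (i,j) \<in> S \<and> (i,j) \<noteq> (i0,j0) \<and> i0+p*j0 \<ge> i+p*j" if P: "(i0,j0) \<in> S" for i0 j0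
  proof -
    define \<kappa> where "\<kappa> = (12/25) * Ibase / (2 * pi * (real p)^2)"
    have k: "\<kappa> < 0" using Ibase_neg pp by (simp add: \<kappa>_def divide_neg_pos mult_pos_neg field_simps)
    have la: "((\<lambda>y. y * ln (norm (gfun (of_real 1 * (of_real (1 / (5 * real p)) + \<i> * of_real y))))) \<longlongrightarrow> \<kappa> * real 1) (at_right 0)"
      by (rule gpath2[where ja=1 and na="5*p" and jb=2 and nb="5*p" and jc=1 and nc=p and jd=2 and nd=p]) (use pp c25p c2p in \<open>simp_all add: \<kappa>_def field_simps\<close>)
    have lb: "((\<lambda>y. y * ln (norm (gfun (of_real (real p) * (of_real (1 / (5 * real p)) + \<i> * of_real y))))) \<longlongrightarrow> \<kappa> * real p) (at_right 0)"
      by (rule gpath2[where ja=1 and na=5 and jb=2 and nb=5 and jc=1 and nc=1 and jd=2 and nd=1]) (use pp c25 in \<open>simp_all add: \<kappa>_def field_simps power2_eq_square\<close>)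
    from D[OF la lb P] obtain i j where ij: "(i,j) \<in> S" "(i,j) \<noteq> (i0,j0)"
      "\<kappa> * real 1 * real i0 + \<kappa> * real p * real j0 \<le> \<kappa> * real 1 * real i + \<kappa> * real p * real j" by blast
    have "1*i0 + p*j0 \<ge> 1*i + p*j" by (rule wneg[OF k refl refl ij(3)])
    thus ?thesis using ij by auto
  qed
  have R: "(p+1,0) \<in> S \<and> (0,p+1) \<in> S \<and> (\<forall>i j. (i,j) \<in> S \<longrightarrow>
           p*i+j \<le> p*(p+1) \<and> i+p*j \<le> p*(p+1) \<and> p+1 \<le> p*i+j \<and> p+1 \<le> i+p*j)"
    by (rule combi[OF p3 finS neS boxS]) (use H1 H2 H3 H4 in blast)+
  show ?thesis
  proof (intro conjI ballI)
    show "C (p+1) 0 \<noteq> 0" using R by (simp add: S_def)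
    show "C 0 (p+1) \<noteq> 0" using R by (simp add: S_def)
  next
    fix j assume j: "j \<in> {1..p+1}"
    show "C (p+1) j = 0"
    proof (rule ccontr)
      assume "C (p+1) j \<noteq> 0"
      hence "(p+1,j) \<in> S" using j by (simp add: S_def)
      hence "p*(p+1)+j \<le> p*(p+1)" using R by blast
      thus False using j by simp
    qed
    show "C j (p+1) = 0"
    proof (rule ccontr)
      assume "C j (p+1) \<noteq> 0"
      hence "(j,p+1) \<in> S" using j by (simp add: S_def)
      hence "j+p*(p+1) \<le> p*(p+1)" using R by blast
      thus False using j by simp
    qed
  next
    fix j assume j: "j \<in> {0..p}"
    show "C 0 j = 0"
    proof (rule ccontr)
      assume "C 0 j \<noteq> 0"
      hence "(0,j) \<in> S" using j by (simp add: S_def)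
      hence "p+1 \<le> p*0+j" using R by blast
      thus False using j by simp
    qed
    show "C j 0 = 0"
    proof (rule ccontr)
      assume "C j 0 \<noteq> 0"
      hence "(j,0) \<in> S" using j by (simp add: S_def)
      hence "p+1 \<le> j+p*0" using R by blast
      thus False using j by simp
    qed
  qed
qed

end
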